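(* There is an absolute constant $C>0$ such that the following holds for every $n\ge2$. Let $v_i:=i$ for $i=1,\dots,n$. Then there exist $s_1,\dots,s_n\in[0,1)$ such that for every $t\in\mathbb{R}$, every $\gamma\in[0,1]$ and every sector $S$ of aperture $\gamma$, $$\big|N_S(s_1+v_1t,\dots,s_n+v_nt)-\gamma n\big|\ \le\ C\big(\sqrt{n\gamma\log n}+\log n\big).$$ Consequently $B(s_1+v_1t,\dots,s_n+v_nt)\le C'\sqrt{n\log n}$ for all $t\in\mathbb{R}$, for an absolute constant $C'$.
   Context: For $r\in\mathbb{R}$, $\{r\}:=r-\lfloor r\rfloor$. A sector of aperture $\gamma\in[0,1]$ is a set $S_{\alpha,\alpha+\gamma}:=\{x\in[0,1]:\{x-\alpha\}\le\gamma\}$ with $\alpha\in\mathbb{R}$. $N_S(x_1,\dots,x_n):=|\{i:\{x_i\}\in S\}|$. The bias is $B(r_1,\dots,r_n):=\sup_{0\le a\le b\le1}\big|\,|\{i:\{r_i\}\in[a,b]\}|-n(b-a)\big|$. $\log$ is base 2. *)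

theory Defs
  imports Complex_Main
begin

definition sector :: "real \<Rightarrow> real \<Rightarrow> real set" where
  "sector \<alpha> \<gamma> = {x \<in> {0..1}. frac (x - \<alpha>) \<le> \<gamma>}"

definition N_count :: "real set \<Rightarrow> nat \<Rightarrow> (nat \<Rightarrow> real) \<Rightarrow> nat" where
  "N_count S n x = card {i \<in> {1..n}. frac (x i) \<in> S}"

definition bias :: "nat \<Rightarrow> (nat \<Rightarrow> real) \<Rightarrow> real" where
  "bias n r = Sup {\<bar>real (card {i \<in> {1..n}. frac (r i) \<in> {a..b}}) - real n * (b - a)\<bar>
                   | a b. 0 \<le> a \<and> a \<le> b \<and> b \<le> 1}"

end

theory Submission
  imports Defs "HOL-Library.FuncSet"
begin

lemma frac_shift_le:
  fixes v g w :: real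
  assumes "frac v \<le> g" "0 \<le> w" "g + w \<le> 1"
  shows "frac (v + w) \<le> g + w"
proof -
  have v: "v = of_int \<lfloor>v\<rfloor> + frac v" by (simp add: frac_def)
  have "frac (v + w) = frac (frac v + w)"
    by (subst v) (simp add: add.assoc)
  also have "\<dots> \<le> g + w"
  proof (cases "frac v + w < 1")
    case True
    then have "frac v + w \<in> {0..<1}" using assms frac_ge_0[of v] by simp
    then have "frac (frac v + w) = frac v + w" by (metis frac_eq_id)
    then show ?thesis using assms by simp
  next
    case False
    then have "frac v + w = 1" using assms by linarith
    then show ?thesis using assms frac_ge_0[of v] by simp
  qed
  finally show ?thesis .
qed

lemma frac_int_div:
  assumes "M > (0::int)"
  shows "frac (of_int z / of_int M :: real) = of_int (z mod M) / of_int M"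
proof -
  have "z = M * (z div M) + z mod M" by simp
  then have "(of_int z / of_int M :: real) = of_int (z div M) + of_int (z mod M) / of_int M"
    using assms by (smt (verit, best) add_divide_distrib nonzero_mult_div_cancel_left of_int_add of_int_mult of_int_0_less_iff)
  moreover have "0 \<le> (of_int (z mod M) / of_int M :: real)" "(of_int (z mod M) / of_int M :: real) < 1"
    using assms by auto
  ultimately show ?thesis by (simp add: frac_eq)
qed

definition gind :: "nat \<Rightarrow> int \<Rightarrow> int \<Rightarrow> nat \<Rightarrow> nat \<Rightarrow> nat \<Rightarrow> real" where
  "gind M J A l i x = (if (int x + int i * J - A) mod int M \<le> int l then 1 else 0)"

lemma bij_shift_mod:
  assumes "M > 0"
  shows "bij_betw (\<lambda>x. nat ((int x + c) mod int M)) {0..<M} {0..<M}"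
proof -
  have inj: "inj_on (\<lambda>x. nat ((int x + c) mod int M)) {0..<M}"
  proof (rule inj_onI)
    fix x y assume xy: "x \<in> {0..<M}" "y \<in> {0..<M}" "nat ((int x + c) mod int M) = nat ((int y + c) mod int M)"
    then have "(int x + c) mod int M = (int y + c) mod int M" using assms
      by (simp add: eq_nat_nat_iff)
    then have "int x mod int M = int y mod int M"
      by (metis mod_diff_left_eq add_diff_cancel_right')
    then show "x = y" using xy by simp
  qed
  have sub: "(\<lambda>x. nat ((int x + c) mod int M)) ` {0..<M} \<subseteq> {0..<M}"
    using assms by (auto simp: nat_less_iff)
  have "card ((\<lambda>x. nat ((int x + c) mod int M)) ` {0..<M}) = card {0..<M::nat}"
    using inj by (simp add: card_image)
  then have "(\<lambda>x. nat ((int x + c) mod int M)) ` {0..<M} = {0..<M}"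
    using sub by (metis card_subset_eq finite_atLeastLessThan)
  with inj show ?thesis by (simp add: bij_betw_def)
qed

lemma coord_sum:
  assumes "M > 0" "l < M"
  shows "(\<Sum>x\<in>{0..<M}. exp (\<mu> * gind M J A l i x)) = real (l+1) * exp \<mu> + real (M - (l+1))"
proof -
  let ?h = "\<lambda>x. nat ((int x + (int i * J - A)) mod int M)"
  let ?g = "\<lambda>y::nat. exp (\<mu> * (if y \<le> l then 1 else 0))"
  have "(\<Sum>x\<in>{0..<M}. exp (\<mu> * gind M J A l i x)) = (\<Sum>x\<in>{0..<M}. ?g (?h x))"
    apply (rule sum.cong, simp)
    using assms by (simp add: gind_def algebra_simps nat_le_iff)
  also have "\<dots> = (\<Sum>y\<in>{0..<M}. ?g y)"
    using sum.reindex_bij_betw[OF bij_shift_mod[OF assms(1), of "int i * J - A"], where g = ?g] by simp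
  also have "\<dots> = (\<Sum>y\<in>{0..<M}. if y \<le> l then exp \<mu> else 1)"
    by (rule sum.cong) auto
  also have "\<dots> = real (card {y\<in>{0..<M}. y \<le> l}) * exp \<mu> + real (card {y\<in>{0..<M}. \<not> y \<le> l})"
    by (simp add: sum.If_cases Int_def set_diff_eq)
  also have "{y\<in>{0..<M}. y \<le> l} = {0..l}" using assms by auto
  also have "{y\<in>{0..<M}. \<not> y \<le> l} = {l+1..<M}" using assms by auto
  finally show ?thesis by simp
qed

lemma tail_gen:
  fixes f :: "nat \<Rightarrow> nat \<Rightarrow> real"
  assumes "finite I" "\<And>i. i\<in>I \<Longrightarrow> finite (B i)"
  shows "real (card {g \<in> PiE I B. T \<le> \<mu> * (\<Sum>i\<in>I. f i (g i))})
           \<le> exp (-T) * (\<Prod>i\<in>I. \<Sum>y\<in>B i. exp (\<mu> * f i y))"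
proof -
  let ?S = "{g \<in> PiE I B. T \<le> \<mu> * (\<Sum>i\<in>I. f i (g i))}"
  have fin: "finite (PiE I B)" using assms by (simp add: finite_PiE)
  have "real (card ?S) = (\<Sum>g\<in>?S. 1)" by simp
  also have "\<dots> \<le> (\<Sum>g\<in>?S. exp (\<mu> * (\<Sum>i\<in>I. f i (g i)) - T))"
    by (rule sum_mono) simp
  also have "\<dots> \<le> (\<Sum>g\<in>PiE I B. exp (\<mu> * (\<Sum>i\<in>I. f i (g i)) - T))"
    by (rule sum_mono2) (use fin in auto)
  also have "\<dots> = exp (-T) * (\<Sum>g\<in>PiE I B. \<Prod>i\<in>I. exp (\<mu> * f i (g i)))"
    by (simp add: sum_distrib_left exp_diff exp_sum[symmetric] assms(1) exp_minus field_simps)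
  also have "(\<Sum>g\<in>PiE I B. \<Prod>i\<in>I. exp (\<mu> * f i (g i))) = (\<Prod>i\<in>I. \<Sum>y\<in>B i. exp (\<mu> * f i y))"
    by (rule prod_sum_PiE[symmetric]) (use assms in auto)
  finally show ?thesis .
qed

lemma tail_M:
  assumes "M > 0" "l < M"
  shows "real (card {g \<in> PiE {1..n} (\<lambda>_. {0..<M}). T \<le> \<mu> * (\<Sum>i\<in>{1..n}. gind M J A l i (g i))})
           \<le> exp (-T) * (real M ^ n * exp (real n * (real (l+1) / real M) * (exp \<mu> - 1)))"
proof -
  let ?p = "real (l+1) / real M"
  have fac: "(\<Sum>y\<in>{0..<M}. exp (\<mu> * gind M J A l i y)) \<le> real M * exp (?p * (exp \<mu> - 1))" for i
  proof -
    have "(\<Sum>y\<in>{0..<M}. exp (\<mu> * gind M J A l i y)) = real (l+1) * exp \<mu> + real (M - (l+1))"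
      by (rule coord_sum[OF assms])
    also have "\<dots> = real M * (1 + ?p * (exp \<mu> - 1))"
      using assms by (simp add: of_nat_diff field_simps)
    also have "\<dots> \<le> real M * exp (?p * (exp \<mu> - 1))"
      by (rule mult_left_mono) (auto simp: exp_ge_add_one_self)
    finally show ?thesis .
  qed
  have "real (card {g \<in> PiE {1..n} (\<lambda>_. {0..<M}). T \<le> \<mu> * (\<Sum>i\<in>{1..n}. gind M J A l i (g i))})
      \<le> exp (-T) * (\<Prod>i\<in>{1..n}. \<Sum>y\<in>{0..<M}. exp (\<mu> * gind M J A l i y))"
    by (rule tail_gen) auto
  also have "(\<Prod>i\<in>{1..n}. \<Sum>y\<in>{0..<M}. exp (\<mu> * gind M J A l i y)) \<le> (\<Prod>i\<in>{1..n}. real M * exp (?p * (exp \<mu> - 1)))"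
    apply (rule prod_mono, rule conjI, rule sum_nonneg, simp)
    by (rule fac)
  also have "\<dots> = real M ^ n * exp (real n * ?p * (exp \<mu> - 1))"
    by (simp add: power_mult_distrib exp_of_nat_mult[symmetric] mult.assoc)
  finally show ?thesis by (simp add: mult_left_mono)
qed




lemma exp_neg_bound:
  fixes x :: real assumes "0 \<le> x" shows "exp (-x) \<le> 1 - x + x^2"
proof -
  have q: "0 \<le> 1 - x + x^2"
  proof -
    have "0 \<le> (x - 1/2)^2 + 3/4" by (intro add_nonneg_nonneg) auto
    also have "\<dots> = 1 - x + x^2" by (simp add: power2_eq_square algebra_simps)
    finally show ?thesis .
  qed
  have "1 \<le> 1 + x^3" using assms by simp
  also have "\<dots> = (1 + x) * (1 - x + x^2)" by (simp add: algebra_simps power2_eq_square power3_eq_cube)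
  also have "\<dots> \<le> exp x * (1 - x + x^2)"
    by (rule mult_right_mono[OF exp_ge_add_one_self q])
  finally have "1 \<le> exp x * (1 - x + x^2)" .
  then show ?thesis by (simp add: exp_minus field_simps)
qed

lemma tail_up:
  assumes "M > 0" "l < M" "0 \<le> k" "k \<le> 1" "a = real n * (real (l+1) / real M)"
  shows "real (card {g \<in> PiE {1..n} (\<lambda>_. {0..<M}). a + D \<le> (\<Sum>i\<in>{1..n}. gind M J A l i (g i))})
           \<le> real M ^ n * exp (a * k^2 - k * D)"
proof -
  have a0: "a \<ge> 0" using assms by simp
  have "{g \<in> PiE {1..n} (\<lambda>_. {0..<M}). a + D \<le> (\<Sum>i\<in>{1..n}. gind M J A l i (g i))}
     \<subseteq> {g \<in> PiE {1..n} (\<lambda>_. {0..<M}). k * (a + D) \<le> k * (\<Sum>i\<in>{1..n}. gind M J A l i (g i))}"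
    by (rule Collect_mono) (blast intro: mult_left_mono[OF _ assms(3)])
  then have "card {g \<in> PiE {1..n} (\<lambda>_. {0..<M}). a + D \<le> (\<Sum>i\<in>{1..n}. gind M J A l i (g i))}
     \<le> card {g \<in> PiE {1..n} (\<lambda>_. {0..<M}). k * (a + D) \<le> k * (\<Sum>i\<in>{1..n}. gind M J A l i (g i))}"
    by (rule card_mono[rotated]) (simp add: finite_PiE)
  then have "real (card {g \<in> PiE {1..n} (\<lambda>_. {0..<M}). a + D \<le> (\<Sum>i\<in>{1..n}. gind M J A l i (g i))})
     \<le> real (card {g \<in> PiE {1..n} (\<lambda>_. {0..<M}). k * (a + D) \<le> k * (\<Sum>i\<in>{1..n}. gind M J A l i (g i))})"
    by (rule of_nat_mono)
  also have "\<dots> \<le> exp (-(k * (a + D))) * (real M ^ n * exp (real n * (real (l+1) / real M) * (exp k - 1)))"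
    by (rule tail_M[OF assms(1,2)])
  also have "\<dots> = real M ^ n * exp (a * (exp k - 1) + - (k * (a + D)))"
    by (simp only: assms(5)[symmetric] exp_add mult_ac)
  also have "\<dots> \<le> real M ^ n * exp (a * k^2 - k * D)"
  proof -
    have "exp k \<le> 1 + k + k^2" using exp_bound[OF assms(3,4)] .
    then have "a * (exp k - 1) \<le> a * (k + k^2)" using a0 by (intro mult_left_mono) auto
    moreover have "a * (k + k^2) + - (k * (a + D)) = a * k^2 - k * D" by (simp add: algebra_simps)
    ultimately have "a * (exp k - 1) + - (k * (a + D)) \<le> a * k^2 - k * D" by linarith
    then show ?thesis by (intro mult_left_mono) auto
  qed
  finally show ?thesis .
qed

lemma tail_low:
  assumes "M > 0" "l < M" "0 \<le> k" "a = real n * (real (l+1) / real M)"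
  shows "real (card {g \<in> PiE {1..n} (\<lambda>_. {0..<M}). (\<Sum>i\<in>{1..n}. gind M J A l i (g i)) \<le> a - D})
           \<le> real M ^ n * exp (a * k^2 - k * D)"
proof -
  have a0: "a \<ge> 0" using assms by simp
  have "{g \<in> PiE {1..n} (\<lambda>_. {0..<M}). (\<Sum>i\<in>{1..n}. gind M J A l i (g i)) \<le> a - D}
     \<subseteq> {g \<in> PiE {1..n} (\<lambda>_. {0..<M}). -k * (a - D) \<le> -k * (\<Sum>i\<in>{1..n}. gind M J A l i (g i))}"
    by (rule Collect_mono) (use assms(3) in \<open>auto intro: mult_left_mono\<close>)
  then have "card {g \<in> PiE {1..n} (\<lambda>_. {0..<M}). (\<Sum>i\<in>{1..n}. gind M J A l i (g i)) \<le> a - D}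
     \<le> card {g \<in> PiE {1..n} (\<lambda>_. {0..<M}). -k * (a - D) \<le> -k * (\<Sum>i\<in>{1..n}. gind M J A l i (g i))}"
    by (rule card_mono[rotated]) (simp add: finite_PiE)
  then have "real (card {g \<in> PiE {1..n} (\<lambda>_. {0..<M}). (\<Sum>i\<in>{1..n}. gind M J A l i (g i)) \<le> a - D})
     \<le> real (card {g \<in> PiE {1..n} (\<lambda>_. {0..<M}). -k * (a - D) \<le> -k * (\<Sum>i\<in>{1..n}. gind M J A l i (g i))})"
    by (rule of_nat_mono)
  also have "\<dots> \<le> exp (-(-k * (a - D))) * (real M ^ n * exp (real n * (real (l+1) / real M) * (exp (-k) - 1)))"
    by (rule tail_M[OF assms(1,2)])
  also have "\<dots> = real M ^ n * exp (a * (exp (-k) - 1) + - (-k * (a - D)))"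
    by (simp only: assms(4)[symmetric] exp_add mult_ac)
  also have "\<dots> \<le> real M ^ n * exp (a * k^2 - k * D)"
  proof -
    have "exp (-k) \<le> 1 - k + k^2" using exp_neg_bound[OF assms(3)] .
    then have "a * (exp (-k) - 1) \<le> a * (- k + k^2)" using a0 by (intro mult_left_mono) auto
    moreover have "a * (- k + k^2) + - (-k * (a - D)) = a * k^2 - k * D" by (simp add: algebra_simps)
    ultimately have "a * (exp (-k) - 1) + - (-k * (a - D)) \<le> a * k^2 - k * D" by linarith
    then show ?thesis by (intro mult_left_mono) auto
  qed
  finally show ?thesis .
qed

lemma choose_lam:
  fixes a L :: real
  assumes "a \<ge> 0" "L \<ge> 1"
  shows "\<exists>k. 0 \<le> k \<and> k \<le> 1 \<and> a * k^2 - k * (16 * (sqrt (a * L) + L)) \<le> -8 * L"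
proof (cases "16 * (sqrt (a * L) + L) \<le> 2 * a")
  case True
  define D where "D = 16 * (sqrt (a * L) + L)"
  have Dpos: "D > 0" using assms by (simp add: D_def add_nonneg_pos)
  then have apos: "a > 0" using True D_def by linarith
  have "D \<ge> 16 * sqrt (a * L)" using assms by (simp add: D_def)
  moreover have aL: "0 \<le> a * L" using assms by (intro mult_nonneg_nonneg) auto
  ultimately have "D^2 \<ge> (16 * sqrt (a * L))^2" by (intro power_mono) simp_all
  moreover note aL
  ultimately have D2: "D^2 \<ge> 256 * (a * L)" by (simp add: power_mult_distrib)
  have "a * (D/(2*a))^2 - (D/(2*a)) * D = -(D^2) / (4*a)"
    using apos by (simp add: field_simps power2_eq_square)
  also have "\<dots> \<le> - (256 * (a*L)) / (4*a)" using D2 apos by (intro divide_right_mono) auto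
  also have "\<dots> = -64 * L" using apos by simp
  finally have "a * (D/(2*a))^2 - (D/(2*a)) * D \<le> -8 * L" using assms by simp
  moreover have "D/(2*a) \<le> 1" "0 \<le> D/(2*a)" using True apos Dpos by (auto simp: D_def)
  ultimately show ?thesis unfolding D_def by blast
next
  case False
  have "a * 1^2 - 1 * (16 * (sqrt (a * L) + L)) \<le> -8 * L"
  proof -
    have s: "0 \<le> sqrt (a * L)" using assms by (intro real_sqrt_ge_zero mult_nonneg_nonneg) auto
    have "2 * a < 16 * sqrt (a * L) + 16 * L" using False by (simp add: algebra_simps)
    then have "a \<le> 8 * L + 16 * sqrt (a * L)" using s by linarith
    then show ?thesis by (simp add: algebra_simps)
  qed
  then show ?thesis by (intro exI[of _ 1]) simp
qed




lemma logn_bounds: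
  assumes "n \<ge> (2::nat)"
  shows "log 2 (real n) \<ge> 1" "log 2 (real n) \<ge> ln (real n)"
proof -
  show "log 2 (real n) \<ge> 1" using assms by simp
  have "ln 2 > (0::real)" by simp
  moreover have "ln 2 < (1::real)" by (rule ln_2_less_1)
  moreover have "ln (real n) \<ge> 0" using assms by simp
  ultimately have "ln (real n) / ln 2 \<ge> ln (real n)"
    by (simp add: le_divide_eq mult_left_le)
  then show "log 2 (real n) \<ge> ln (real n)" by (simp add: log_def)
qed

lemma exp_neg8:
  assumes "n \<ge> (2::nat)"
  shows "exp (-8 * log 2 (real n)) \<le> 1 / real n ^ 8"
proof -
  have "exp (-8 * log 2 (real n)) \<le> exp (-8 * ln (real n))"
    using logn_bounds(2)[OF assms] by simp
  also have "exp (-8 * ln (real n)) = 1 / exp (real 8 * ln (real n))"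
    by (simp add: exp_minus field_simps)
  also have "exp (real 8 * ln (real n)) = real n ^ 8"
    using assms by (simp only: exp_of_nat_mult) simp
  finally show ?thesis .
qed

definition gcnt :: "nat \<Rightarrow> nat \<Rightarrow> int \<Rightarrow> int \<Rightarrow> nat \<Rightarrow> (nat \<Rightarrow> nat) \<Rightarrow> real" where
  "gcnt M n J A l g = (\<Sum>i\<in>{1..n}. gind M J A l i (g i))"

lemma bad_card:
  assumes "n \<ge> 2" "M > 0" "l < M" "a = real n * (real (l+1) / real M)"
    and "L = log 2 (real n)" "D = 16 * (sqrt (a * L) + L)"
  shows "real (card ({g \<in> PiE {1..n} (\<lambda>_. {0..<M}). a + D \<le> gcnt M n J A l g}
              \<union> {g \<in> PiE {1..n} (\<lambda>_. {0..<M}). gcnt M n J A l g \<le> a - D}))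
        \<le> 2 * real M ^ n / real n ^ 8"
proof -
  have L1: "L \<ge> 1" using logn_bounds(1)[OF assms(1)] assms by simp
  have a0: "a \<ge> 0" using assms by simp
  obtain k where k: "0 \<le> k" "k \<le> 1" "a * k^2 - k * D \<le> -8 * L"
    using choose_lam[OF a0 L1] assms(6) by blast
  have e: "real M ^ n * exp (a * k^2 - k * D) \<le> real M ^ n / real n ^ 8"
  proof -
    have "exp (a * k^2 - k * D) \<le> exp (-8 * L)" using k by simp
    also have "\<dots> \<le> 1 / real n ^ 8" using exp_neg8[OF assms(1)] assms by simp
    finally have "exp (a * k^2 - k * D) \<le> 1 / real n ^ 8" .
    then have "real M ^ n * exp (a * k^2 - k * D) \<le> real M ^ n * (1 / real n ^ 8)"
      by (rule mult_left_mono) simp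
    then show ?thesis by simp
  qed
  have up: "real (card {g \<in> PiE {1..n} (\<lambda>_. {0..<M}). a + D \<le> gcnt M n J A l g}) \<le> real M ^ n / real n ^ 8"
    unfolding gcnt_def by (rule order_trans[OF tail_up[OF assms(2,3) k(1,2) assms(4), of D J A] e])
  have low: "real (card {g \<in> PiE {1..n} (\<lambda>_. {0..<M}). gcnt M n J A l g \<le> a - D}) \<le> real M ^ n / real n ^ 8"
    unfolding gcnt_def by (rule order_trans[OF tail_low[OF assms(2,3) k(1) assms(4), of J A D] e])
  have "card ({g \<in> PiE {1..n} (\<lambda>_. {0..<M}). a + D \<le> gcnt M n J A l g}
              \<union> {g \<in> PiE {1..n} (\<lambda>_. {0..<M}). gcnt M n J A l g \<le> a - D})
       \<le> card {g \<in> PiE {1..n} (\<lambda>_. {0..<M}). a + D \<le> gcnt M n J A l g}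
         + card {g \<in> PiE {1..n} (\<lambda>_. {0..<M}). gcnt M n J A l g \<le> a - D}"
    by (rule card_Un_le)
  then have "real (card ({g \<in> PiE {1..n} (\<lambda>_. {0..<M}). a + D \<le> gcnt M n J A l g}
              \<union> {g \<in> PiE {1..n} (\<lambda>_. {0..<M}). gcnt M n J A l g \<le> a - D}))
       \<le> real (card {g \<in> PiE {1..n} (\<lambda>_. {0..<M}). a + D \<le> gcnt M n J A l g})
         + real (card {g \<in> PiE {1..n} (\<lambda>_. {0..<M}). gcnt M n J A l g \<le> a - D})"
    by (simp only: of_nat_add[symmetric] of_nat_le_iff)
  then show ?thesis using up low by linarith
qed




lemma good_exists:
  assumes n2: "n \<ge> 2"
  shows "\<exists>g\<in>PiE {1..n} (\<lambda>_. {0..<n^2}). \<forall>J\<in>{0..<int (n^2)}. \<forall>A\<in>{0..<int (n^2)}. \<forall>l\<in>{0..<n^2}.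
     \<bar>gcnt (n^2) n J A l g - real n * (real (l+1) / real (n^2))\<bar>
        < 16 * (sqrt (real n * (real (l+1) / real (n^2)) * log 2 (real n)) + log 2 (real n))"
proof -
  define M where "M = n^2"
  define L where "L = log 2 (real n)"
  define \<Omega> where "\<Omega> = PiE {1..n} (\<lambda>_. {0..<M})"
  define T where "T = {0..<int M} \<times> {0..<int M} \<times> {0..<M}"
  define av where "av l = real n * (real (l+1) / real M)" for l
  define Dv where "Dv l = 16 * (sqrt (av l * L) + L)" for l
  define B where "B x = (case x of (J, A, l) \<Rightarrow>
      {g \<in> \<Omega>. av l + Dv l \<le> gcnt M n J A l g} \<union> {g \<in> \<Omega>. gcnt M n J A l g \<le> av l - Dv l})" for x
  have Mpos: "M > 0" using n2 by (simp add: M_def)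
  have finT: "finite T" by (simp add: T_def)
  have cardT: "card T = M^3" by (simp add: T_def card_cartesian_product power3_eq_cube)
  have Bx: "real (card (B x)) \<le> 2 * real M ^ n / real n ^ 8" if "x \<in> T" for x
  proof -
    obtain J A l where x: "x = (J, A, l)" by (cases x) auto
    have l: "l < M" using that x by (simp add: T_def)
    show ?thesis unfolding x B_def \<Omega>_def
      by (simp only: prod.case) (rule bad_card[OF n2 Mpos l av_def L_def Dv_def])
  qed
  have "card (\<Union> (B ` T)) \<le> (\<Sum>x\<in>T. card (B x))" by (rule card_UN_le[OF finT])
  then have "real (card (\<Union> (B ` T))) \<le> (\<Sum>x\<in>T. real (card (B x)))"
    by (simp only: of_nat_sum[symmetric] of_nat_le_iff)
  also have "\<dots> \<le> (\<Sum>x\<in>T. 2 * real M ^ n / real n ^ 8)" by (rule sum_mono) (rule Bx)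
  also have "\<dots> = real (M^3) * (2 * real M ^ n / real n ^ 8)" using cardT by simp
  also have "\<dots> = 2 * real M ^ n / real n ^ 2"
  proof -
    have "real (M^3) = real n ^ 6" by (simp add: M_def flip: power_mult)
    moreover have "real n ^ 8 = real n ^ 6 * real n ^ 2" by (simp flip: power_add)
    moreover have "real n ^ 6 > 0" using n2 by simp
    ultimately show ?thesis by (simp add: divide_simps)
  qed
  also have "\<dots> < real M ^ n"
  proof -
    have "(2::real) ^ 2 \<le> real n ^ 2" using n2 by (intro power_mono) auto
    then have n22: "real n ^ 2 > 2" by simp
    have X: "real M ^ n > 0" using Mpos by simp
    have "2 * real M ^ n < real n ^ 2 * real M ^ n" using mult_strict_right_mono[OF n22 X] .
    moreover have "real n ^ 2 > 0" using n22 by linarith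
    ultimately show ?thesis by (simp add: pos_divide_less_eq mult.commute)
  qed
  also have "real M ^ n = real (card \<Omega>)" by (simp add: \<Omega>_def card_PiE)
  finally have "card (\<Union> (B ` T)) < card \<Omega>" by simp
  then have "\<Omega> \<noteq> \<Union> (B ` T)" by auto
  moreover have "\<Union> (B ` T) \<subseteq> \<Omega>" by (auto simp: B_def split: prod.splits)
  ultimately obtain g where g: "g \<in> \<Omega>" "g \<notin> \<Union> (B ` T)" by blast
  show ?thesis
  proof (rule bexI[OF _ g(1)[unfolded \<Omega>_def M_def]], intro ballI)
    fix J A l assume JAl: "J \<in> {0..<int (n^2)}" "A \<in> {0..<int (n^2)}" "l \<in> {0..<n^2}"
    then have "(J, A, l) \<in> T" by (simp add: T_def M_def)
    then have "g \<notin> B (J, A, l)" using g by blast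
    then have "\<not> av l + Dv l \<le> gcnt M n J A l g" "\<not> gcnt M n J A l g \<le> av l - Dv l"
      using g(1) by (auto simp: B_def)
    then show "\<bar>gcnt (n^2) n J A l g - real n * (real (l+1) / real (n^2))\<bar>
        < 16 * (sqrt (real n * (real (l+1) / real (n^2)) * log 2 (real n)) + log 2 (real n))"
      unfolding av_def Dv_def L_def M_def by linarith
  qed
qed




lemma D_bound:
  fixes a c L :: real
  assumes "0 \<le> a" "a \<le> c + 3" "0 \<le> c" "L \<ge> 1"
  shows "16 * (sqrt (a * L) + L) \<le> 16 * sqrt (c * L) + 64 * L"
proof -
  have "sqrt (a * L) \<le> sqrt (c * L + 3 * L)"
    using assms by (intro real_sqrt_le_mono) (simp add: mult_right_mono flip: distrib_right)
  also have "\<dots> \<le> sqrt (c * L) + sqrt (3 * L)"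
    using assms by (intro sqrt_add_le_add_sqrt) auto
  also have "sqrt (3 * L) \<le> 3 * L"
  proof -
    have "3 * L \<le> (3 * L) * (3 * L)" using assms by simp
    then have "sqrt (3 * L) \<le> sqrt ((3 * L) * (3 * L))" by (rule real_sqrt_le_mono)
    also have "\<dots> = 3 * L" using assms by (subst real_sqrt_abs2) simp
    finally show ?thesis .
  qed
  finally show ?thesis by simp
qed

lemma frac_frac_sub: "frac (frac y - \<alpha>) = frac (y - (\<alpha>::real))"
proof -
  have "frac y - \<alpha> = (y - \<alpha>) + of_int (- \<lfloor>y\<rfloor>)" by (simp add: frac_def)
  then show ?thesis by (simp only: frac_add_of_int_right)
qed

lemma N_count_eq:
  "N_count (sector \<alpha> \<gamma>) n x = card {i\<in>{1..n}. frac (x i - \<alpha>) \<le> \<gamma>}"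
proof -
  have "frac (x i) \<in> sector \<alpha> \<gamma> \<longleftrightarrow> frac (x i - \<alpha>) \<le> \<gamma>" for i
    using frac_lt_1[of "x i"] frac_ge_0[of "x i"] by (auto simp: sector_def frac_frac_sub)
  then show ?thesis by (simp add: N_count_def)
qed

lemma mod_period:
  "(x + i * J - A) mod (M::int) = (x + i * (J mod M) - A mod M) mod M"
proof -
  define q r q' r' where "q = J div M" "r = J mod M" "q' = A div M" "r' = A mod M"
  have J: "J = q * M + r" and A: "A = q' * M + r'" by (simp_all add: q_r_q'_r'_def)
  have "x + i * J - A = (x + i * r - r') + (i * q - q') * M"
    unfolding J A by (simp add: algebra_simps)
  then have "x + i * J - A = (x + i * (J mod M) - A mod M) + (i * (J div M) - A div M) * M"
    by (simp add: q_r_q'_r'_def)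
  then show ?thesis by (simp only: mod_mult_self1)
qed

lemma gcnt_card:
  "gcnt M n J A l g = real (card {i\<in>{1..n}. (int (g i) + int i * J - A) mod int M \<le> int l})"
proof -
  have "gcnt M n J A l g = (\<Sum>i\<in>{1..n}. of_bool ((int (g i) + int i * J - A) mod int M \<le> int l))"
    unfolding gcnt_def gind_def by (rule sum.cong) auto
  also have "\<dots> = real (card ({1..n} \<inter> {i. (int (g i) + int i * J - A) mod int M \<le> int l}))"
    by simp
  also have "{1..n} \<inter> {i. (int (g i) + int i * J - A) mod int M \<le> int l}
     = {i\<in>{1..n}. (int (g i) + int i * J - A) mod int M \<le> int l}" by blast
  finally show ?thesis .
qed

lemma good_all:
  assumes n2: "n \<ge> 2"
    and good: "\<forall>J\<in>{0..<int (n^2)}. \<forall>A\<in>{0..<int (n^2)}. \<forall>l\<in>{0..<n^2}.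
     \<bar>gcnt (n^2) n J A l g - real n * (real (l+1) / real (n^2))\<bar>
        < 16 * (sqrt (real n * (real (l+1) / real (n^2)) * log 2 (real n)) + log 2 (real n))"
    and l: "l < n^2"
  shows "\<bar>real (card {i\<in>{1..n}. (int (g i) + int i * J - A) mod int (n^2) \<le> int l})
            - real n * (real (l+1) / real (n^2))\<bar>
        < 16 * (sqrt (real n * (real (l+1) / real (n^2)) * log 2 (real n)) + log 2 (real n))"
proof -
  have Mpos: "int (n^2) > 0" using n2 by simp
  have "{i\<in>{1..n}. (int (g i) + int i * J - A) mod int (n^2) \<le> int l}
      = {i\<in>{1..n}. (int (g i) + int i * (J mod int (n^2)) - A mod int (n^2)) mod int (n^2) \<le> int l}"
    by (simp only: mod_period[of "int (g _)" "int _" J A "int (n^2)"])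
  then have "real (card {i\<in>{1..n}. (int (g i) + int i * J - A) mod int (n^2) \<le> int l})
     = gcnt (n^2) n (J mod int (n^2)) (A mod int (n^2)) l g"
    by (simp only: gcnt_card)
  moreover have "J mod int (n^2) \<in> {0..<int (n^2)}" "A mod int (n^2) \<in> {0..<int (n^2)}" "l \<in> {0..<n^2}"
    using Mpos l by auto
  ultimately have "\<bar>gcnt (n^2) n (J mod int (n^2)) (A mod int (n^2)) l g - real n * (real (l+1) / real (n^2))\<bar>
        < 16 * (sqrt (real n * (real (l+1) / real (n^2)) * log 2 (real n)) + log 2 (real n))"
    using good by blast
  then show ?thesis by (simp only: \<open>real (card _) = _\<close>)
qed




lemma upper_count:
  fixes g :: "nat \<Rightarrow> nat" and t \<alpha> \<gamma> :: real
  assumes n2: "n \<ge> 2"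
    and GA: "\<And>J A l. l < n^2 \<Longrightarrow> \<bar>real (card {i\<in>{1..n}. (int (g i) + int i * J - A) mod int (n^2) \<le> int l})
            - real n * (real (l+1) / real (n^2))\<bar>
        < 16 * (sqrt (real n * (real (l+1) / real (n^2)) * log 2 (real n)) + log 2 (real n))"
    and \<gamma>: "0 \<le> \<gamma>" "\<gamma> \<le> 1"
  shows "real (card {i\<in>{1..n}. frac (real (g i) / real (n^2) + real i * t - \<alpha>) \<le> \<gamma>})
          \<le> real n * \<gamma> + 3 + (16 * sqrt (real n * \<gamma> * log 2 (real n)) + 64 * log 2 (real n))"
proof -
  define L where "L = log 2 (real n)"
  have L1: "L \<ge> 1" using logn_bounds(1)[OF n2] by (simp add: L_def)
  define m where "m = real (n^2)"
  have m: "m = real n * real n" by (simp add: m_def power2_eq_square)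
  have npos: "real n \<ge> 2" using n2 by simp
  have mpos: "m > 0" using m npos by simp
  have mn: "real n / m = 1 / real n" using m npos by simp
  let ?S = "{i\<in>{1..n}. frac (real (g i) / real (n^2) + real i * t - \<alpha>) \<le> \<gamma>}"
  have extra_nonneg: "0 \<le> 16 * sqrt (real n * \<gamma> * L) + 64 * L" using L1 \<gamma> by simp
  show ?thesis
  proof (cases "\<gamma> + 2 / real n < 1")
    case False
    have "card ?S \<le> card {1..n}" by (rule card_mono) auto
    then have "real (card ?S) \<le> real n" by simp
    also have "real n \<le> real n * \<gamma> + 2"
    proof -
      have "1 - 2 / real n \<le> \<gamma>" using False by simp
      then have "real n * (1 - 2 / real n) \<le> real n * \<gamma>" using npos by (intro mult_left_mono) auto
      then show ?thesis using npos by (simp add: algebra_simps)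
    qed
    finally show ?thesis using extra_nonneg unfolding L_def by linarith
  next
    case True
    define J where "J = \<lfloor>m * t\<rfloor>"
    define A where "A = \<lfloor>m * \<alpha>\<rfloor> - int n"
    define l where "l = nat (\<lfloor>m * \<gamma>\<rfloor> + 2 * int n)"
    have fl0: "\<lfloor>m * \<gamma>\<rfloor> \<ge> 0" using mpos \<gamma> by simp
    have il: "int l = \<lfloor>m * \<gamma>\<rfloor> + 2 * int n" using fl0 by (simp add: l_def)
    have mg: "m * \<gamma> + 2 * real n < m"
    proof -
      have "m * (\<gamma> + 2 / real n) < m * 1" using True mpos by (intro mult_strict_left_mono) auto
      moreover have "m * (2 / real n) = 2 * real n" using m npos by simp
      ultimately show ?thesis by (simp add: algebra_simps)
    qed
    have rl: "real l \<le> m * \<gamma> + 2 * real n"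
    proof -
      have "real l = real_of_int (int l)" by simp
      also have "\<dots> = of_int \<lfloor>m * \<gamma>\<rfloor> + 2 * real n" by (simp add: il)
      finally show ?thesis by linarith
    qed
    have lM: "l < n^2"
    proof -
      have "real l < m" using rl mg by linarith
      then show ?thesis by (simp add: m_def)
    qed
    have sub: "?S \<subseteq> {i\<in>{1..n}. (int (g i) + int i * J - A) mod int (n^2) \<le> int l}"
    proof
      fix i assume "i \<in> ?S"
      then have i: "1 \<le> i" "i \<le> n" and fr: "frac (real (g i) / real (n^2) + real i * t - \<alpha>) \<le> \<gamma>" by auto
      define z where "z = int (g i) + int i * J - A"
      define d where "d = t - of_int J / m"
      define e where "e = \<alpha> - of_int A / m - real i * d"
      have Jt: "of_int J \<le> m * t" "m * t < of_int J + 1" unfolding J_def by linarith+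
      have Aa: "of_int \<lfloor>m * \<alpha>\<rfloor> \<le> m * \<alpha>" "m * \<alpha> < of_int \<lfloor>m * \<alpha>\<rfloor> + 1" by linarith+
      have d0: "0 \<le> d" using Jt mpos by (simp add: d_def field_simps)
      have dm: "d * m = m * t - of_int J" using mpos by (simp add: d_def field_simps)
      have d1: "d * m < 1" using Jt by (simp only: dm)
      have id0: "0 \<le> real i * d" using d0 by simp
      have id1: "real i * d * m \<le> real n"
      proof -
        have h1: "real i * (d * m) \<le> real i" using d1 by (intro mult_left_le) auto
        have h2: "real i \<le> real n" using i by simp
        have h3: "real i * d * m = real i * (d * m)" by (simp only: mult.assoc)
        show ?thesis using h1 h2 h3 by linarith
      qed
      have aA: "(\<alpha> - of_int A / m) * m = m * \<alpha> - of_int \<lfloor>m * \<alpha>\<rfloor> + real n"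
        using mpos by (simp add: A_def field_simps)
      have em0: "e * m = (\<alpha> - of_int A / m) * m - real i * d * m" by (simp add: e_def left_diff_distrib)
      have em: "e * m = m * \<alpha> - of_int \<lfloor>m * \<alpha>\<rfloor> + real n - real i * d * m"
        using em0 aA by linarith
      have idm0: "0 \<le> real i * d * m" using id0 mpos by simp
      have e0: "0 \<le> e * m" using em Aa id1 by linarith
      then have e0': "0 \<le> e" using mpos by (simp add: zero_le_mult_iff)
      have e1: "e * m \<le> 2 * real n" using em Aa idm0 npos by linarith
      have e2: "e \<le> 2 / real n"
      proof -
        have "e \<le> 2 * real n / m" using e1 mpos by (simp add: pos_le_divide_eq)
        also have "\<dots> = 2 / real n" using m npos by simp
        finally show ?thesis .
      qed
      have eq: "real (g i) / real (n^2) + real i * t - \<alpha> + e = of_int z / m"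
        using mpos unfolding m_def[symmetric] by (simp add: e_def d_def z_def field_simps)
      have "frac (real (g i) / real (n^2) + real i * t - \<alpha> + e) \<le> \<gamma> + e"
        using True e2 e0' by (intro frac_shift_le[OF fr]) auto
      moreover have "frac (of_int z / m) = of_int (z mod int (n^2)) / m"
        using frac_int_div[of "int (n^2)" z] n2 by (simp add: m_def)
      ultimately have "of_int (z mod int (n^2)) / m \<le> \<gamma> + e" by (simp only: eq)
      then have "of_int (z mod int (n^2)) \<le> m * \<gamma> + m * e" using mpos
        by (simp add: pos_divide_le_eq algebra_simps)
      then have "of_int (z mod int (n^2) - 2 * int n) \<le> m * \<gamma>" using e1 by (simp add: mult.commute)
      then have "z mod int (n^2) - 2 * int n \<le> \<lfloor>m * \<gamma>\<rfloor>" by (simp add: le_floor_iff)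
      then show "i \<in> {i\<in>{1..n}. (int (g i) + int i * J - A) mod int (n^2) \<le> int l}"
        using i il by (simp add: z_def)
    qed
    have "card ?S \<le> card {i\<in>{1..n}. (int (g i) + int i * J - A) mod int (n^2) \<le> int l}"
      by (rule card_mono[OF _ sub]) simp
    then have "real (card ?S) \<le> real (card {i\<in>{1..n}. (int (g i) + int i * J - A) mod int (n^2) \<le> int l})"
      by simp
    also have "\<dots> < real n * (real (l+1) / real (n^2)) + 16 * (sqrt (real n * (real (l+1) / real (n^2)) * L) + L)"
      using GA[OF lM, of J A] unfolding L_def by linarith
    also have "\<dots> \<le> real n * \<gamma> + 3 + (16 * sqrt (real n * \<gamma> * L) + 64 * L)"
    proof -
      have a_eq: "real n * (real (l+1) / real (n^2)) = (real l + 1) / real n"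
        using npos by (simp add: power2_eq_square)
      have "real l + 1 \<le> real n * (real n * \<gamma> + 3)"
        using rl npos by (simp add: m algebra_simps)
      then have a3: "(real l + 1) / real n \<le> real n * \<gamma> + 3"
        using npos by (simp add: pos_divide_le_eq mult.commute)
      have "16 * (sqrt ((real l + 1) / real n * L) + L) \<le> 16 * sqrt (real n * \<gamma> * L) + 64 * L"
        by (rule D_bound[OF _ a3 _ L1]) (use npos \<gamma> in auto)
      then show ?thesis unfolding a_eq using a3 by linarith
    qed
    finally show ?thesis unfolding L_def by linarith
  qed
qed




lemma lower_count:
  fixes g :: "nat \<Rightarrow> nat" and t \<alpha> \<gamma> :: real
  assumes n2: "n \<ge> 2"
    and GA: "\<And>J A l. l < n^2 \<Longrightarrow> \<bar>real (card {i\<in>{1..n}. (int (g i) + int i * J - A) mod int (n^2) \<le> int l})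
            - real n * (real (l+1) / real (n^2))\<bar>
        < 16 * (sqrt (real n * (real (l+1) / real (n^2)) * log 2 (real n)) + log 2 (real n))"
    and \<gamma>: "0 \<le> \<gamma>" "\<gamma> \<le> 1"
  shows "real n * \<gamma> - 3 - (16 * sqrt (real n * \<gamma> * log 2 (real n)) + 64 * log 2 (real n))
          \<le> real (card {i\<in>{1..n}. frac (real (g i) / real (n^2) + real i * t - \<alpha>) \<le> \<gamma>})"
proof -
  define L where "L = log 2 (real n)"
  have L1: "L \<ge> 1" using logn_bounds(1)[OF n2] by (simp add: L_def)
  define m where "m = real (n^2)"
  have m: "m = real n * real n" by (simp add: m_def power2_eq_square)
  have npos: "real n \<ge> 2" using n2 by simp
  have mpos: "m > 0" using m npos by simp
  let ?S = "{i\<in>{1..n}. frac (real (g i) / real (n^2) + real i * t - \<alpha>) \<le> \<gamma>}"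
  have extra_nonneg: "0 \<le> 16 * sqrt (real n * \<gamma> * L) + 64 * L" using L1 \<gamma> by simp
  show ?thesis
  proof (cases "\<lfloor>m * \<gamma>\<rfloor> < 2 * int n")
    case True
    then have "m * \<gamma> < 2 * real n + 1" by linarith
    moreover have "m * \<gamma> = real n * (real n * \<gamma>)" by (simp add: m)
    ultimately have "real n * (real n * \<gamma>) < real n * 3" using npos by linarith
    then have "real n * \<gamma> < 3" using npos by simp
    then show ?thesis using extra_nonneg unfolding L_def by simp
  next
    case False
    define J where "J = \<lfloor>m * t\<rfloor>"
    define A where "A = \<lfloor>m * \<alpha>\<rfloor> + 1"
    define l where "l = nat (\<lfloor>m * \<gamma>\<rfloor> - 2 * int n)"
    have il: "int l = \<lfloor>m * \<gamma>\<rfloor> - 2 * int n" using False by (simp add: l_def)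
    have rl_eq: "real l = of_int \<lfloor>m * \<gamma>\<rfloor> - 2 * real n"
    proof -
      have "real l = real_of_int (int l)" by simp
      also have "\<dots> = of_int \<lfloor>m * \<gamma>\<rfloor> - 2 * real n" by (simp add: il)
      finally show ?thesis .
    qed
    have rl: "real l \<le> m * \<gamma> - 2 * real n" using rl_eq by linarith
    have rl2: "real l > m * \<gamma> - 2 * real n - 1" using rl_eq by linarith
    have mg: "m * \<gamma> \<le> m" using mpos \<gamma> by simp
    have lM: "l < n^2"
    proof -
      have "real l < m" using rl mg npos by linarith
      then show ?thesis by (simp add: m_def)
    qed
    have sub: "{i\<in>{1..n}. (int (g i) + int i * J - A) mod int (n^2) \<le> int l} \<subseteq> ?S"
    proof
      fix i assume "i \<in> {i\<in>{1..n}. (int (g i) + int i * J - A) mod int (n^2) \<le> int l}"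
      then have i: "1 \<le> i" "i \<le> n" and zl: "(int (g i) + int i * J - A) mod int (n^2) \<le> int l" by auto
      define z where "z = int (g i) + int i * J - A"
      define d where "d = t - of_int J / m"
      define e where "e = of_int A / m - \<alpha> + real i * d"
      have Jt: "of_int J \<le> m * t" "m * t < of_int J + 1" unfolding J_def by linarith+
      have Aa: "of_int \<lfloor>m * \<alpha>\<rfloor> \<le> m * \<alpha>" "m * \<alpha> < of_int \<lfloor>m * \<alpha>\<rfloor> + 1" by linarith+
      have dm: "d * m = m * t - of_int J" using mpos by (simp add: d_def field_simps)
      have d0: "0 \<le> d * m" using Jt by (simp only: dm)
      have d1: "d * m < 1" using Jt by (simp only: dm)
      have idm0: "0 \<le> real i * d * m" using d0 by (simp add: mult.assoc)
      have id1: "real i * d * m \<le> real n"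
      proof -
        have h1: "real i * (d * m) \<le> real i" using d1 by (intro mult_left_le) auto
        have h2: "real i \<le> real n" using i by simp
        have h3: "real i * d * m = real i * (d * m)" by (simp only: mult.assoc)
        show ?thesis using h1 h2 h3 by linarith
      qed
      have em0: "e * m = (of_int A / m - \<alpha>) * m + real i * d * m" by (simp add: e_def distrib_right)
      have aA: "(of_int A / m - \<alpha>) * m = of_int \<lfloor>m * \<alpha>\<rfloor> + 1 - m * \<alpha>"
        using mpos by (simp add: A_def field_simps)
      have em: "e * m = of_int \<lfloor>m * \<alpha>\<rfloor> + 1 - m * \<alpha> + real i * d * m" using em0 aA by linarith
      have e0: "0 \<le> e * m" using em Aa idm0 by linarith
      then have e0': "0 \<le> e" using mpos by (simp add: zero_le_mult_iff)
      have e1: "e * m \<le> 2 * real n" using em Aa id1 npos by linarith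
      have eq: "of_int z / m + e = real (g i) / real (n^2) + real i * t - \<alpha>"
        using mpos unfolding m_def[symmetric] by (simp add: e_def d_def z_def field_simps)
      have fz: "frac (of_int z / m) = of_int (z mod int (n^2)) / m"
        using frac_int_div[of "int (n^2)" z] n2 by (simp add: m_def)
      have "of_int (z mod int (n^2)) \<le> real l" using zl by (simp add: z_def)
      then have fzl: "frac (of_int z / m) \<le> real l / m" unfolding fz using mpos
        by (simp add: divide_right_mono)
      have lg: "real l / m + e \<le> \<gamma>"
      proof -
        have "real l + e * m \<le> m * \<gamma>" using rl e1 by linarith
        then have "(real l + e * m) / m \<le> \<gamma>" using mpos by (simp add: pos_divide_le_eq mult.commute)
        then show ?thesis using mpos by (simp add: add_divide_distrib)
      qed
      have "frac (of_int z / m + e) \<le> real l / m + e"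
        using lg \<gamma> e0' by (intro frac_shift_le[OF fzl]) auto
      then have "frac (real (g i) / real (n^2) + real i * t - \<alpha>) \<le> \<gamma>" using lg by (simp only: eq)
      then show "i \<in> ?S" using i by simp
    qed
    have "card {i\<in>{1..n}. (int (g i) + int i * J - A) mod int (n^2) \<le> int l} \<le> card ?S"
      by (rule card_mono[OF _ sub]) simp
    then have "real (card {i\<in>{1..n}. (int (g i) + int i * J - A) mod int (n^2) \<le> int l}) \<le> real (card ?S)"
      by simp
    moreover have "real n * (real (l+1) / real (n^2)) - 16 * (sqrt (real n * (real (l+1) / real (n^2)) * L) + L)
       < real (card {i\<in>{1..n}. (int (g i) + int i * J - A) mod int (n^2) \<le> int l})"
      using GA[OF lM, of J A] unfolding L_def by linarith
    moreover have "real n * \<gamma> - 3 - (16 * sqrt (real n * \<gamma> * L) + 64 * L)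
       \<le> real n * (real (l+1) / real (n^2)) - 16 * (sqrt (real n * (real (l+1) / real (n^2)) * L) + L)"
    proof -
      have a_eq: "real n * (real (l+1) / real (n^2)) = (real l + 1) / real n"
        using npos by (simp add: power2_eq_square)
      have "real l + 1 \<le> real n * (real n * \<gamma> + 3)"
        using rl npos by (simp add: m algebra_simps)
      then have a3: "(real l + 1) / real n \<le> real n * \<gamma> + 3"
        using npos by (simp add: pos_divide_le_eq mult.commute)
      have "real n * (real n * \<gamma> - 2) \<le> real l + 1"
        using rl2 npos by (simp add: m algebra_simps)
      then have a2: "real n * \<gamma> - 2 \<le> (real l + 1) / real n"
        using npos by (simp add: pos_le_divide_eq mult.commute)
      have "16 * (sqrt ((real l + 1) / real n * L) + L) \<le> 16 * sqrt (real n * \<gamma> * L) + 64 * L"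
        by (rule D_bound[OF _ a3 _ L1]) (use npos \<gamma> in auto)
      then show ?thesis unfolding a_eq using a2 by linarith
    qed
    ultimately show ?thesis unfolding L_def by linarith
  qed
qed




lemma fin_arith:
  fixes cI cS cZ g sg sn L :: real
  assumes "cI \<le> cS" "cS \<le> cI + cZ" "\<bar>cS - g\<bar> \<le> 67 * (sg + L)" "\<bar>cZ - 0\<bar> \<le> 67 * (0 + L)"
    "sg \<le> sn" "L \<le> sn"
  shows "\<bar>cI - g\<bar> \<le> 201 * sn"
proof -
  have h1: "cS - g \<le> 67 * sg + 67 * L" "g - cS \<le> 67 * sg + 67 * L" using assms(3) by (simp_all add: abs_le_iff algebra_simps)
  have h2: "cZ \<le> 67 * L" using assms(4) by (simp add: abs_le_iff)
  show ?thesis using h1 h2 assms(1,2,5,6) by (simp add: abs_le_iff)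
qed

lemma bias_from_sector:
  fixes x :: "nat \<Rightarrow> real"
  assumes n2: "n \<ge> 2"
    and SB: "\<forall>\<gamma> \<alpha>. 0 \<le> \<gamma> \<and> \<gamma> \<le> 1 \<longrightarrow>
       \<bar>real (N_count (sector \<alpha> \<gamma>) n x) - \<gamma> * real n\<bar>
         \<le> 67 * (sqrt (real n * \<gamma> * log 2 (real n)) + log 2 (real n))"
  shows "bias n x \<le> 201 * sqrt (real n * log 2 (real n))"
proof -
  define L where "L = log 2 (real n)"
  have L1: "L \<ge> 1" using logn_bounds(1)[OF n2] by (simp add: L_def)
  have Ln: "L \<le> real n"
  proof -
    have "log 2 (real n) < real n" using log2_of_power_less[of n n] n2 by simp
    then show ?thesis by (simp add: L_def)
  qed
  have LsqrtnL: "L \<le> sqrt (real n * L)"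
  proof -
    have "L * L \<le> real n * L" using Ln L1 by (intro mult_right_mono) auto
    then have "sqrt (L * L) \<le> sqrt (real n * L)" by (rule real_sqrt_le_mono)
    then show ?thesis using L1 by simp
  qed
  let ?E = "{\<bar>real (card {i \<in> {1..n}. frac (x i) \<in> {a..b}}) - real n * (b - a)\<bar>
                   | a b. 0 \<le> a \<and> a \<le> b \<and> b \<le> 1}"
  have "Sup ?E \<le> 201 * sqrt (real n * L)"
  proof (rule cSup_least)
    have w: "\<bar>real (card {i \<in> {1..n}. frac (x i) \<in> {0..0}}) - real n * (0 - 0)\<bar> \<in> ?E"
      by (rule CollectI, rule exI[of _ 0], rule exI[of _ 0]) simp
    show "?E \<noteq> {}" using w by (metis empty_iff)
  next
    fix v assume "v \<in> ?E"
    then have "\<exists>a b. v = \<bar>real (card {i \<in> {1..n}. frac (x i) \<in> {a..b}}) - real n * (b - a)\<bar> \<and> 0 \<le> a \<and> a \<le> b \<and> b \<le> 1"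
      by (simp only: mem_Collect_eq)
    then obtain a b where ab: "0 \<le> a" "a \<le> b" "b \<le> 1"
      and v: "v = \<bar>real (card {i \<in> {1..n}. frac (x i) \<in> {a..b}}) - real n * (b - a)\<bar>" by blast
    define \<gamma> where "\<gamma> = b - a"
    have \<gamma>: "0 \<le> \<gamma>" "\<gamma> \<le> 1" using ab by (auto simp: \<gamma>_def)
    define I where "I = {i \<in> {1..n}. frac (x i) \<in> {a..b}}"
    define S where "S = {i \<in> {1..n}. frac (x i - a) \<le> \<gamma>}"
    define Z where "Z = {i \<in> {1..n}. frac (x i - 0) \<le> 0}"
    have NS: "N_count (sector a \<gamma>) n x = card S" unfolding S_def by (rule N_count_eq)
    have NZ: "N_count (sector 0 0) n x = card Z" unfolding Z_def by (rule N_count_eq)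
    have SBS: "\<bar>real (card S) - \<gamma> * real n\<bar> \<le> 67 * (sqrt (real n * \<gamma> * L) + L)"
      unfolding NS[symmetric] L_def using mp[OF spec[OF spec[OF SB, of \<gamma>], of a] conjI[OF \<gamma>]] .
    have SBZ: "\<bar>real (card Z) - 0 * real n\<bar> \<le> 67 * (sqrt (real n * 0 * L) + L)"
      unfolding NZ[symmetric] L_def using mp[OF spec[OF spec[OF SB, of 0], of 0]] by simp
    have IS: "I \<subseteq> S"
    proof
      fix i assume "i \<in> I"
      then have i: "i \<in> {1..n}" and f: "a \<le> frac (x i)" "frac (x i) \<le> b" by (auto simp: I_def)
      have "frac (x i) - a \<in> {0..<1}" using f frac_lt_1[of "x i"] ab by auto
      then have "frac (frac (x i) - a) = frac (x i) - a" by (rule frac_eq_id)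
      then have "frac (x i - a) = frac (x i) - a" by (simp add: frac_frac_sub)
      then show "i \<in> S" using i f by (simp add: S_def \<gamma>_def)
    qed
    have SIZ: "S \<subseteq> I \<union> Z"
    proof
      fix i assume "i \<in> S"
      then have i: "i \<in> {1..n}" and f: "frac (x i - a) \<le> \<gamma>" by (auto simp: S_def)
      have f0: "0 \<le> frac (x i)" "frac (x i) < 1" by (simp_all add: frac_lt_1)
      show "i \<in> I \<union> Z"
      proof (cases "a \<le> frac (x i)")
        case True
        have "frac (x i) - a \<in> {0..<1}" using True f0 ab by auto
        then have "frac (frac (x i) - a) = frac (x i) - a" by (rule frac_eq_id)
        then have "frac (x i - a) = frac (x i) - a" by (simp add: frac_frac_sub)
        then have "frac (x i) \<le> b" using f by (simp add: \<gamma>_def)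
        then show ?thesis using True i by (simp add: I_def)
      next
        case False
        have "0 \<le> frac (x i) - a + 1" "frac (x i) - a + 1 < 1" using False f0 ab by linarith+
        then have "frac (x i) - a + 1 \<in> {0..<1}" by simp
        then have "frac (frac (x i) - a + 1) = frac (x i) - a + 1" by (rule frac_eq_id)
        then have "frac (x i - a) = frac (x i) - a + 1" by (simp add: frac_frac_sub frac_1_eq)
        then have "frac (x i) \<le> 0" using f ab by (simp add: \<gamma>_def)
        then have h: "frac (x i) = 0" using f0 by simp
        have z: "frac (x i - 0) \<le> 0" using h by (simp only: diff_zero order_refl)
        have "i \<in> Z" unfolding Z_def using i z by (simp only: mem_Collect_eq simp_thms)
        then show ?thesis by (rule UnI2)
      qed
    qed
    have c1: "card I \<le> card S" by (rule card_mono[OF _ IS]) (simp add: S_def)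
    have "card S \<le> card (I \<union> Z)" by (rule card_mono[OF _ SIZ]) (simp add: I_def Z_def)
    also have "\<dots> \<le> card I + card Z" by (rule card_Un_le)
    finally have c2: "card S \<le> card I + card Z" .
    have sq: "sqrt (real n * \<gamma> * L) \<le> sqrt (real n * L)"
      using \<gamma> L1 by (intro real_sqrt_le_mono) (simp add: mult_left_le_one_le mult.commute mult.left_commute)
    have nba: "real n * (b - a) = \<gamma> * real n" by (simp add: \<gamma>_def)
    have c1r: "real (card I) \<le> real (card S)" using c1 by (simp only: of_nat_le_iff)
    have c2r: "real (card S) \<le> real (card I) + real (card Z)" using c2 by (simp only: of_nat_add[symmetric] of_nat_le_iff)
    have SBZ': "\<bar>real (card Z) - 0\<bar> \<le> 67 * (0 + L)" using SBZ by simp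
    have "\<bar>real (card I) - \<gamma> * real n\<bar> \<le> 201 * sqrt (real n * L)"
      by (rule fin_arith[OF c1r c2r SBS SBZ' sq LsqrtnL])
    then show "v \<le> 201 * sqrt (real n * L)" unfolding v I_def[symmetric] nba .
  qed
  then show ?thesis unfolding bias_def L_def .
qed




lemma fin2:
  fixes N g g2 s L :: real
  assumes "N \<le> g + 3 + (16 * s + 64 * L)" "g - 3 - (16 * s + 64 * L) \<le> N" "0 \<le> s" "1 \<le> L" "g = g2"
  shows "\<bar>N - g2\<bar> \<le> 67 * (s + L)"
  using assms by (simp add: abs_le_iff)

lemma sector_all:
  fixes g :: "nat \<Rightarrow> nat"
  assumes n2: "n \<ge> 2"
    and GA: "\<And>J A l. l < n^2 \<Longrightarrow> \<bar>real (card {i\<in>{1..n}. (int (g i) + int i * J - A) mod int (n^2) \<le> int l})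
            - real n * (real (l+1) / real (n^2))\<bar>
        < 16 * (sqrt (real n * (real (l+1) / real (n^2)) * log 2 (real n)) + log 2 (real n))"
  shows "\<forall>\<gamma> \<alpha>. 0 \<le> \<gamma> \<and> \<gamma> \<le> 1 \<longrightarrow>
       \<bar>real (N_count (sector \<alpha> \<gamma>) n (\<lambda>i. real (g i) / real (n^2) + real i * t)) - \<gamma> * real n\<bar>
         \<le> 67 * (sqrt (real n * \<gamma> * log 2 (real n)) + log 2 (real n))"
proof (intro allI impI)
  fix \<gamma> \<alpha> :: real assume \<gamma>: "0 \<le> \<gamma> \<and> \<gamma> \<le> 1"
  define L where "L = log 2 (real n)"
  have L1: "L \<ge> 1" using logn_bounds(1)[OF n2] by (simp add: L_def)
  have sq0: "0 \<le> sqrt (real n * \<gamma> * L)" using \<gamma> L1 by simp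
  have N: "N_count (sector \<alpha> \<gamma>) n (\<lambda>i. real (g i) / real (n^2) + real i * t)
     = card {i\<in>{1..n}. frac (real (g i) / real (n^2) + real i * t - \<alpha>) \<le> \<gamma>}"
    by (simp only: N_count_eq)
  have up: "real (card {i\<in>{1..n}. frac (real (g i) / real (n^2) + real i * t - \<alpha>) \<le> \<gamma>})
          \<le> real n * \<gamma> + 3 + (16 * sqrt (real n * \<gamma> * L) + 64 * L)"
    unfolding L_def by (rule upper_count[OF n2 GA]) (use \<gamma> in auto)
  have low: "real n * \<gamma> - 3 - (16 * sqrt (real n * \<gamma> * L) + 64 * L)
          \<le> real (card {i\<in>{1..n}. frac (real (g i) / real (n^2) + real i * t - \<alpha>) \<le> \<gamma>})"
    unfolding L_def by (rule lower_count[OF n2 GA]) (use \<gamma> in auto)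
  have "\<bar>real (card {i\<in>{1..n}. frac (real (g i) / real (n^2) + real i * t - \<alpha>) \<le> \<gamma>}) - \<gamma> * real n\<bar>
         \<le> 67 * (sqrt (real n * \<gamma> * L) + L)"
    by (rule fin2[OF up low sq0 L1 mult.commute])
  then show "\<bar>real (N_count (sector \<alpha> \<gamma>) n (\<lambda>i. real (g i) / real (n^2) + real i * t)) - \<gamma> * real n\<bar>
         \<le> 67 * (sqrt (real n * \<gamma> * log 2 (real n)) + log 2 (real n))"
    unfolding N L_def .
qed

theorem theorem4p1:
  shows "\<exists>C > 0. \<exists>C' > 0. \<forall>n::nat. n \<ge> 2 \<longrightarrow>
    (\<exists>s :: nat \<Rightarrow> real. (\<forall>i \<in> {1..n}. 0 \<le> s i \<and> s i < 1) \<and>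
      (\<forall>t::real. \<forall>\<gamma>::real. \<forall>\<alpha>::real. 0 \<le> \<gamma> \<and> \<gamma> \<le> 1 \<longrightarrow>
         \<bar>real (N_count (sector \<alpha> \<gamma>) n (\<lambda>i. s i + real i * t)) - \<gamma> * real n\<bar>
           \<le> C * (sqrt (real n * \<gamma> * log 2 (real n)) + log 2 (real n))) \<and>
      (\<forall>t::real. bias n (\<lambda>i. s i + real i * t) \<le> C' * sqrt (real n * log 2 (real n))))"
proof (rule exI[of _ 67], rule conjI, simp, rule exI[of _ 201], rule conjI, simp, intro allI impI)
  fix n :: nat assume n2: "n \<ge> 2"
  obtain g where g: "g \<in> PiE {1..n} (\<lambda>_. {0..<n^2})"
    and good: "\<forall>J\<in>{0..<int (n^2)}. \<forall>A\<in>{0..<int (n^2)}. \<forall>l\<in>{0..<n^2}.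
     \<bar>gcnt (n^2) n J A l g - real n * (real (l+1) / real (n^2))\<bar>
        < 16 * (sqrt (real n * (real (l+1) / real (n^2)) * log 2 (real n)) + log 2 (real n))"
    using good_exists[OF n2] by (elim bexE) (rule that)
  have GA: "\<bar>real (card {i\<in>{1..n}. (int (g i) + int i * J - A) mod int (n^2) \<le> int l})
            - real n * (real (l+1) / real (n^2))\<bar>
        < 16 * (sqrt (real n * (real (l+1) / real (n^2)) * log 2 (real n)) + log 2 (real n))"
    if "l < n^2" for J A l
    by (rule good_all[OF n2 good that])
  define s where "s i = real (g i) / real (n^2)" for i
  have SB: "\<forall>\<gamma> \<alpha>. 0 \<le> \<gamma> \<and> \<gamma> \<le> 1 \<longrightarrow>
       \<bar>real (N_count (sector \<alpha> \<gamma>) n (\<lambda>i. s i + real i * t)) - \<gamma> * real n\<bar>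
         \<le> 67 * (sqrt (real n * \<gamma> * log 2 (real n)) + log 2 (real n))" for t
    unfolding s_def by (rule sector_all[OF n2 GA])
  show "\<exists>s :: nat \<Rightarrow> real. (\<forall>i \<in> {1..n}. 0 \<le> s i \<and> s i < 1) \<and>
      (\<forall>t::real. \<forall>\<gamma>::real. \<forall>\<alpha>::real. 0 \<le> \<gamma> \<and> \<gamma> \<le> 1 \<longrightarrow>
         \<bar>real (N_count (sector \<alpha> \<gamma>) n (\<lambda>i. s i + real i * t)) - \<gamma> * real n\<bar>
           \<le> 67 * (sqrt (real n * \<gamma> * log 2 (real n)) + log 2 (real n))) \<and>
      (\<forall>t::real. bias n (\<lambda>i. s i + real i * t) \<le> 201 * sqrt (real n * log 2 (real n)))"
  proof (rule exI[of _ s], intro conjI)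
    show "\<forall>i\<in>{1..n}. 0 \<le> s i \<and> s i < 1"
    proof
      fix i assume i: "i \<in> {1..n}"
      then have "g i < n^2" using g by (auto simp: PiE_iff)
      then have "real (g i) < real (n^2)" by (simp only: of_nat_less_iff)
      then show "0 \<le> s i \<and> s i < 1" using n2 by (simp add: s_def)
    qed
  next
    show "\<forall>t \<gamma> \<alpha>. 0 \<le> \<gamma> \<and> \<gamma> \<le> 1 \<longrightarrow>
       \<bar>real (N_count (sector \<alpha> \<gamma>) n (\<lambda>i. s i + real i * t)) - \<gamma> * real n\<bar>
         \<le> 67 * (sqrt (real n * \<gamma> * log 2 (real n)) + log 2 (real n))"
    proof (intro allI)
      fix t \<gamma> \<alpha> :: real
      show "0 \<le> \<gamma> \<and> \<gamma> \<le> 1 \<longrightarrow>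
       \<bar>real (N_count (sector \<alpha> \<gamma>) n (\<lambda>i. s i + real i * t)) - \<gamma> * real n\<bar>
         \<le> 67 * (sqrt (real n * \<gamma> * log 2 (real n)) + log 2 (real n))"
        by (rule spec[OF spec[OF SB[of t], of \<gamma>], of \<alpha>])
    qed
  next
    show "\<forall>t. bias n (\<lambda>i. s i + real i * t) \<le> 201 * sqrt (real n * log 2 (real n))"
    proof
      fix t :: real
      show "bias n (\<lambda>i. s i + real i * t) \<le> 201 * sqrt (real n * log 2 (real n))"
        by (rule bias_from_sector[OF n2 SB])
    qed
  qed
qed


end
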